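(* Let $\gamma > 1$ and let $I$ be a $\gamma$-stable instance of the Euclidean Steiner tree problem with optimal Steiner tree $\mathrm{OPT}$. If $a_1, a_2$ are distinct terminals and $b$ is a Steiner point such that $a_1 b$ and $a_2 b$ are both edges of $\mathrm{OPT}$, then the angle $\angle a_1 b a_2$ is greater than $2\sin^{-1}(\gamma/2)$.
   Context: An instance of the Euclidean Steiner tree problem consists of a finite set $V \subset \mathbb{R}^d$, a set $T \subseteq V$ of terminals, and the complete graph on $V$ with edge weights $w_{uv} = \|u - v\|$. Points of $V \setminus T$ are Steiner points. A Steiner tree is a tree in this complete graph whose vertex set contains all of $T$; its weight is the sum of its edge weights. For $\gamma > 1$, the instance is $\gamma$-stable if it has a minimum-weight Steiner tree $\mathrm{OPT}$ such that for every $w' : V \times V \to \mathbb{R}_{\ge 0}$ with $w_{uv} \le w'_{uv} \le \gamma w_{uv}$ for all $u,v$, every minimum-weight Steiner tree with respect to $w'$ equals $\mathrm{OPT}$ (the $w'$ need not be Euclidean). $\angle a_1 b a_2 \in [0,\pi]$ is the angle at $b$ between the vectors $a_1 - b$ and $a_2 - b$. *)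

theory Defs
  imports "HOL-Analysis.Analysis"
begin

definition adj :: "'a set set \<Rightarrow> 'a \<Rightarrow> 'a \<Rightarrow> bool" where
  "adj E x y \<longleftrightarrow> {x, y} \<in> E"

definition graph_on :: "'a set \<Rightarrow> 'a set set \<Rightarrow> bool" where
  "graph_on S E \<longleftrightarrow> (\<forall>e\<in>E. \<exists>u v. u \<in> S \<and> v \<in> S \<and> u \<noteq> v \<and> e = {u, v})"

definition connected_graph :: "'a set \<Rightarrow> 'a set set \<Rightarrow> bool" where
  "connected_graph S E \<longleftrightarrow> (\<forall>u\<in>S. \<forall>v\<in>S. (adj E)\<^sup>*\<^sup>* u v)"

definition acyclic_graph :: "'a set set \<Rightarrow> bool" where
  "acyclic_graph E \<longleftrightarrow> (\<forall>u v. {u, v} \<in> E \<longrightarrow> \<not> (adj (E - {{u, v}}))\<^sup>*\<^sup>* u v)"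

definition is_tree :: "'a set \<Rightarrow> 'a set set \<Rightarrow> bool" where
  "is_tree S E \<longleftrightarrow> S \<noteq> {} \<and> graph_on S E \<and> connected_graph S E \<and> acyclic_graph E"

text \<open>A Steiner tree for terminals T in the complete graph on V.\<close>
definition steiner_tree :: "'a set \<Rightarrow> 'a set \<Rightarrow> 'a set \<times> 'a set set \<Rightarrow> bool" where
  "steiner_tree V T X \<longleftrightarrow> fst X \<subseteq> V \<and> T \<subseteq> fst X \<and> is_tree (fst X) (snd X)"

definition tree_weight :: "('a set \<Rightarrow> real) \<Rightarrow> 'a set \<times> 'a set set \<Rightarrow> real" where
  "tree_weight w X = (\<Sum>e\<in>snd X. w e)"

definition min_steiner_tree :: "('a set \<Rightarrow> real) \<Rightarrow> 'a set \<Rightarrow> 'a set \<Rightarrow> 'a set \<times> 'a set set \<Rightarrow> bool" where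
  "min_steiner_tree w V T X \<longleftrightarrow> steiner_tree V T X \<and>
     (\<forall>Y. steiner_tree V T Y \<longrightarrow> tree_weight w X \<le> tree_weight w Y)"

definition eucl_w :: "'a::euclidean_space set \<Rightarrow> real" where
  "eucl_w e = (THE d. \<exists>u v. e = {u, v} \<and> d = norm (u - v))"

definition stable_opt :: "real \<Rightarrow> 'a::euclidean_space set \<Rightarrow> 'a set \<Rightarrow> 'a set \<times> 'a set set \<Rightarrow> bool" where
  "stable_opt \<gamma> V T OPT \<longleftrightarrow> min_steiner_tree eucl_w V T OPT \<and>
     (\<forall>w'. (\<forall>u\<in>V. \<forall>v\<in>V. u \<noteq> v \<longrightarrow>
              norm (u - v) \<le> w' {u, v} \<and> w' {u, v} \<le> \<gamma> * norm (u - v)) \<longrightarrow>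
           (\<forall>X. min_steiner_tree w' V T X \<longrightarrow> X = OPT))"

definition gamma_stable :: "real \<Rightarrow> 'a::euclidean_space set \<Rightarrow> 'a set \<Rightarrow> bool" where
  "gamma_stable \<gamma> V T \<longleftrightarrow> (\<exists>OPT. stable_opt \<gamma> V T OPT)"

definition angle_at :: "'a::euclidean_space \<Rightarrow> 'a \<Rightarrow> 'a \<Rightarrow> real" where
  "angle_at a1 b a2 = arccos (((a1 - b) \<bullet> (a2 - b)) / (norm (a1 - b) * norm (a2 - b)))"

end

theory Submission
  imports Defs
begin

lemma adj_sym: "adj E x y \<Longrightarrow> adj E y x"
  unfolding adj_def by (simp add: insert_commute)

lemma rt_sym: "(adj E)\<^sup>*\<^sup>* x y \<Longrightarrow> (adj E)\<^sup>*\<^sup>* y x"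
proof (induction rule: rtranclp_induct)
  case base then show ?case by simp
next
  case (step y z)
  then show ?case using adj_sym
    by (meson converse_rtranclp_into_rtranclp)
qed

lemma rt_mono: "(adj E)\<^sup>*\<^sup>* x y \<Longrightarrow> E \<subseteq> F \<Longrightarrow> (adj F)\<^sup>*\<^sup>* x y"
proof (induction rule: rtranclp_induct)
  case base then show ?case by simp
next
  case (step y z)
  then show ?case unfolding adj_def
    by (metis (no_types, lifting) rtranclp.rtrancl_into_rtrancl subsetD adj_def)
qed

lemma adj_rt: "{x, y} \<in> E \<Longrightarrow> (adj E)\<^sup>*\<^sup>* x y"
  by (simp add: adj_def r_into_rtranclp)

lemma rt_split:
  assumes "(adj (F \<union> {{p, q}}))\<^sup>*\<^sup>* x y"
  shows "(adj F)\<^sup>*\<^sup>* x y \<or> ((adj F)\<^sup>*\<^sup>* x p \<and> (adj F)\<^sup>*\<^sup>* q y)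
         \<or> ((adj F)\<^sup>*\<^sup>* x q \<and> (adj F)\<^sup>*\<^sup>* p y)"
  using assms
proof (induction rule: rtranclp_induct)
  case base then show ?case by simp
next
  case (step y z)
  from step(2) have e: "{y, z} \<in> F \<or> {y, z} = {p, q}" unfolding adj_def by auto
  show ?case
  proof (cases "{y, z} \<in> F")
    case True
    then have "adj F y z" by (simp add: adj_def)
    then show ?thesis using step(3)
      by (meson rtranclp.rtrancl_into_rtrancl)
  next
    case False
    then have "(y = p \<and> z = q) \<or> (y = q \<and> z = p)" using e by (auto simp: doubleton_eq_iff)
    then show ?thesis using step(3)
      by (metis rt_sym rtranclp.rtrancl_refl rtranclp_trans)
  qed
qed


lemma not_in_E:
  assumes "acyclic_graph E" "{a1, b} \<in> E" "{a2, b} \<in> E" "a1 \<noteq> a2" "a1 \<noteq> b" "a2 \<noteq> b"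
  shows "{a1, a2} \<notin> E"
proof
  assume h: "{a1, a2} \<in> E"
  have "{a1, b} \<noteq> {a1, a2}" "{a2, b} \<noteq> {a1, a2}" using assms(4,5,6) by (auto simp: doubleton_eq_iff)
  then have "{a1, b} \<in> E - {{a1, a2}}" "{b, a2} \<in> E - {{a1, a2}}" using assms(2,3)
    by (auto simp: insert_commute)
  then have "(adj (E - {{a1, a2}}))\<^sup>*\<^sup>* a1 a2"
    by (meson adj_rt rtranclp_trans)
  then show False using assms(1) h unfolding acyclic_graph_def by blast
qed

lemma exchange_tree:
  assumes tr: "is_tree S E" and e1: "{a1, b} \<in> E" and e3: "{a2, b} \<in> E"
    and ne: "a1 \<noteq> a2" "a1 \<noteq> b" "a2 \<noteq> b" and inS: "a1 \<in> S" "a2 \<in> S"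
  shows "is_tree S (E - {{a1, b}} \<union> {{a1, a2}})"
proof -
  define E' where "E' = E - {{a1, b}} \<union> {{a1, a2}}"
  have ac: "acyclic_graph E" and gr: "graph_on S E" and co: "connected_graph S E" and Sne: "S \<noteq> {}"
    using tr unfolding is_tree_def by auto
  have e2n: "{a1, a2} \<notin> E" using not_in_E[OF ac e1 e3 ne] .
  have d12: "{a1, b} \<noteq> {a1, a2}" "{a2, b} \<noteq> {a1, b}" "{a2, b} \<noteq> {a1, a2}"
    using ne by (auto simp: doubleton_eq_iff)
  have g: "graph_on S E'" using gr inS ne unfolding graph_on_def E'_def by auto
  have step: "(adj E')\<^sup>*\<^sup>* x y" if "adj E x y" for x y
  proof (cases "{x, y} = {a1, b}")
    case True
    have "{a1, a2} \<in> E'" "{a2, b} \<in> E'" using e3 d12 unfolding E'_def by auto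
    then have "(adj E')\<^sup>*\<^sup>* a1 b" by (meson adj_rt rtranclp_trans)
    then show ?thesis using True by (metis doubleton_eq_iff rt_sym)
  next
    case False
    then have "{x, y} \<in> E'" using that unfolding E'_def adj_def by auto
    then show ?thesis by (rule adj_rt)
  qed
  have c: "connected_graph S E'"
    unfolding connected_graph_def
  proof (intro ballI)
    fix u v assume "u \<in> S" "v \<in> S"
    then have "(adj E)\<^sup>*\<^sup>* u v" using co unfolding connected_graph_def by blast
    then show "(adj E')\<^sup>*\<^sup>* u v"
      by (induction rule: rtranclp_induct) (auto intro: rtranclp_trans step)
  qed
  have noE1: "\<not> (adj (E - {{a1, b}}))\<^sup>*\<^sup>* a1 b" using ac e1 unfolding acyclic_graph_def by blast
  have noE3: "\<not> (adj (E - {{a2, b}}))\<^sup>*\<^sup>* a2 b" using ac e3 unfolding acyclic_graph_def by blast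
  have a: "acyclic_graph E'"
    unfolding acyclic_graph_def
  proof (intro allI impI notI)
    fix u v assume f: "{u, v} \<in> E'" and p: "(adj (E' - {{u, v}}))\<^sup>*\<^sup>* u v"
    show False
    proof (cases "{u, v} = {a1, a2}")
      case True
      have "E' - {{u, v}} = E - {{a1, b}}" using True e2n unfolding E'_def by auto
      then have p': "(adj (E - {{a1, b}}))\<^sup>*\<^sup>* u v" using p by simp
      have "(adj (E - {{a1, b}}))\<^sup>*\<^sup>* a1 a2" using p' True
        by (metis doubleton_eq_iff rt_sym)
      moreover have "(adj (E - {{a1, b}}))\<^sup>*\<^sup>* a2 b" using e3 d12 by (intro adj_rt) auto
      ultimately show False using noE1 by (meson rtranclp_trans)
    next
      case False
      define F where "F = E - {{a1, b}} - {{u, v}}"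
      have fE: "{u, v} \<in> E" "{u, v} \<noteq> {a1, b}" using f False unfolding E'_def by auto
      have "E' - {{u, v}} = F \<union> {{a1, a2}}" using False unfolding E'_def F_def by auto
      then have "(adj (F \<union> {{a1, a2}}))\<^sup>*\<^sup>* u v" using p by simp
      note sp = rt_split[OF this]
      have FE: "F \<subseteq> E - {{u, v}}" "F \<subseteq> E - {{a1, b}}" unfolding F_def by auto
      have noUV: "\<not> (adj (E - {{u, v}}))\<^sup>*\<^sup>* u v" using ac fE unfolding acyclic_graph_def by blast
      show False
      proof (cases "{u, v} = {a2, b}")
        case False
        have "{a1, b} \<in> E - {{u, v}}" "{b, a2} \<in> E - {{u, v}}" using e1 e3 fE False
          by (auto simp: insert_commute)
        then have r12: "(adj (E - {{u, v}}))\<^sup>*\<^sup>* a1 a2" by (meson adj_rt rtranclp_trans)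
        then have r21: "(adj (E - {{u, v}}))\<^sup>*\<^sup>* a2 a1" by (rule rt_sym)
        note m = rt_mono[OF _ FE(1)]
        from sp show False
        proof (elim disjE conjE)
          assume "(adj F)\<^sup>*\<^sup>* u v" then show False using m noUV by blast
        next
          assume "(adj F)\<^sup>*\<^sup>* u a1" "(adj F)\<^sup>*\<^sup>* a2 v"
          then show False using m noUV r12 by (meson rtranclp_trans)
        next
          assume "(adj F)\<^sup>*\<^sup>* u a2" "(adj F)\<^sup>*\<^sup>* a1 v"
          then show False using m noUV r21 by (meson rtranclp_trans)
        qed
      next
        case True
        note m1 = rt_mono[OF _ FE(1)] and m2 = rt_mono[OF _ FE(2)]
        from True have "(u = a2 \<and> v = b) \<or> (u = b \<and> v = a2)" by (auto simp: doubleton_eq_iff)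
        then show False
        proof
          assume uv: "u = a2 \<and> v = b"
          show False using sp uv noUV noE1 m1 m2 by (metis rt_sym)
        next
          assume uv: "u = b \<and> v = a2"
          show False using sp uv noUV noE1 m1 m2 by (metis rt_sym)
        qed
      qed
    qed
  qed
  show ?thesis using Sne g c a unfolding is_tree_def E'_def by auto
qed


lemma eucl_w_eq: "eucl_w {u, v} = norm (u - v)"
  unfolding eucl_w_def
proof (rule the_equality)
  show "\<exists>u' v'. {u, v} = {u', v'} \<and> norm (u - v) = norm (u' - v')" by blast
next
  fix d assume "\<exists>u' v'. {u, v} = {u', v'} \<and> d = norm (u' - v')"
  then obtain u' v' where "{u, v} = {u', v'}" "d = norm (u' - v')" by blast
  then show "d = norm (u - v)" by (auto simp: doubleton_eq_iff norm_minus_commute)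
qed

lemma finite_trees:
  assumes "finite V"
  shows "finite {X. steiner_tree V T X}"
proof (rule finite_subset)
  show "{X. steiner_tree V T X} \<subseteq> Pow V \<times> Pow (Pow V)"
  proof
    fix X assume "X \<in> {X. steiner_tree V T X}"
    then have "fst X \<subseteq> V" "graph_on (fst X) (snd X)"
      unfolding steiner_tree_def is_tree_def by auto
    then show "X \<in> Pow V \<times> Pow (Pow V)" unfolding graph_on_def
      by (cases X) auto
  qed
  show "finite (Pow V \<times> Pow (Pow V))" using assms by simp
qed

lemma stable_strict:
  assumes fin: "finite V" and st: "stable_opt \<gamma> V T OPT"
    and w': "\<forall>u\<in>V. \<forall>v\<in>V. u \<noteq> v \<longrightarrow> norm (u - v) \<le> w' {u, v} \<and> w' {u, v} \<le> \<gamma> * norm (u - v)"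
    and Y: "steiner_tree V T Y" "Y \<noteq> OPT"
  shows "tree_weight w' OPT < tree_weight w' Y"
proof -
  let ?S = "{X. steiner_tree V T X}"
  let ?f = "tree_weight w'"
  have fS: "finite (?f ` ?S)" using finite_trees[OF fin] by simp
  have ne: "?f ` ?S \<noteq> {}" using Y(1) by blast
  obtain Z where Z: "Z \<in> ?S" "?f Z = Min (?f ` ?S)" using Min_in[OF fS ne] by auto
  have Zmin: "min_steiner_tree w' V T Z" unfolding min_steiner_tree_def
    using Z fS by auto
  have uniq: "\<And>X. min_steiner_tree w' V T X \<Longrightarrow> X = OPT"
    using st w' unfolding stable_opt_def by blast
  have "Z = OPT" using uniq Zmin by blast
  show ?thesis
  proof (rule ccontr)
    assume "\<not> ?thesis"
    then have "?f Y \<le> ?f OPT" by simp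
    then have "min_steiner_tree w' V T Y" using Zmin \<open>Z = OPT\<close> Y(1)
      unfolding min_steiner_tree_def by (meson order_trans)
    then show False using uniq Y(2) by blast
  qed
qed


lemma side_ineq:
  fixes V T :: "'a::euclidean_space set" and \<gamma> :: real
    and OPT :: "'a set \<times> 'a set set" and a1 a2 b :: 'a
  assumes "\<gamma> > 1"
    and "finite V" and "T \<subseteq> V"
    and "stable_opt \<gamma> V T OPT"
    and "a1 \<in> T" and "a2 \<in> T" and "a1 \<noteq> a2"
    and "b \<in> V - T"
    and "{a1, b} \<in> snd OPT" and "{a2, b} \<in> snd OPT"
  shows "\<gamma> * norm (a1 - b) < norm (a1 - a2)"
proof -
  define E where "E = snd OPT"
  define S where "S = fst OPT"
  have st: "steiner_tree V T OPT" using assms(4) unfolding stable_opt_def min_steiner_tree_def by blast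
  then have SV: "S \<subseteq> V" "T \<subseteq> S" and tr: "is_tree S E"
    unfolding steiner_tree_def S_def E_def by auto
  have ne: "a1 \<noteq> b" "a2 \<noteq> b" using assms(5,6,8) by auto
  have inS: "a1 \<in> S" "a2 \<in> S" using SV assms(5,6) by auto
  have e1: "{a1, b} \<in> E" and e3: "{a2, b} \<in> E" using assms(9,10) E_def by auto
  have ac: "acyclic_graph E" using tr unfolding is_tree_def by auto
  have e2n: "{a1, a2} \<notin> E" using not_in_E[OF ac e1 e3 assms(7) ne] .
  have finE: "finite E"
  proof (rule finite_subset)
    have "graph_on S E" using tr unfolding is_tree_def by simp
    then have "\<forall>e\<in>E. e \<subseteq> S" unfolding graph_on_def by fastforce
    then show "E \<subseteq> Pow V" using SV(1) by auto
    show "finite (Pow V)" using assms(2) by simp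
  qed
  define w' where "w' = (\<lambda>e. if e = {a1, b} then \<gamma> * eucl_w e else eucl_w e)"
  have w'ok: "\<forall>u\<in>V. \<forall>v\<in>V. u \<noteq> v \<longrightarrow> norm (u - v) \<le> w' {u, v} \<and> w' {u, v} \<le> \<gamma> * norm (u - v)"
  proof (intro ballI impI)
    fix u v assume "u \<in> V" "v \<in> V" "u \<noteq> v"
    have n: "0 \<le> norm (u - v)" by simp
    show "norm (u - v) \<le> w' {u, v} \<and> w' {u, v} \<le> \<gamma> * norm (u - v)"
    proof (cases "{u, v} = {a1, b}")
      case True
      then have "w' {u, v} = \<gamma> * eucl_w {u, v}" unfolding w'_def by simp
      then have "w' {u, v} = \<gamma> * norm (u - v)" by (simp only: eucl_w_eq)
      then show ?thesis using n assms(1) by (simp add: mult_le_cancel_right1)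
    next
      case False
      then have "w' {u, v} = norm (u - v)" unfolding w'_def by (simp add: eucl_w_eq)
      then show ?thesis using n assms(1) by (simp add: mult_le_cancel_right1)
    qed
  qed
  define Y where "Y = (S, E - {{a1, b}} \<union> {{a1, a2}})"
  have Ytree: "steiner_tree V T Y"
    using exchange_tree[OF tr e1 e3 assms(7) ne inS] SV unfolding Y_def steiner_tree_def by simp
  have d12: "{a1, b} \<noteq> {a1, a2}" using ne assms(7) by (auto simp: doubleton_eq_iff)
  have YO: "Y \<noteq> OPT"
  proof
    assume "Y = OPT"
    then have "snd Y = E" using E_def by simp
    then have "E - {{a1, b}} \<union> {{a1, a2}} = E" unfolding Y_def by simp
    then show False using e1 d12 by blast
  qed
  have lt: "tree_weight w' OPT < tree_weight w' Y"
    using stable_strict[OF assms(2,4) w'ok Ytree YO] .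
  have wO: "tree_weight w' OPT = sum w' E" unfolding tree_weight_def E_def by simp
  have "tree_weight w' Y = sum w' (insert {a1, a2} (E - {{a1, b}}))"
    unfolding tree_weight_def Y_def by simp
  also have "\<dots> = w' {a1, a2} + sum w' (E - {{a1, b}})"
    using finE e2n by (simp add: sum.insert)
  also have "\<dots> = w' {a1, a2} + sum w' E - w' {a1, b}"
    using finE e1 by (simp add: sum_diff1)
  finally have wY: "tree_weight w' Y = norm (a1 - a2) + sum w' E - \<gamma> * norm (a1 - b)"
    using d12 by (simp add: w'_def eucl_w_eq)
  show ?thesis using lt wO wY by simp
qed


lemma core1:
  fixes x y g d p :: real
  assumes "x > 0" "y > 0" "g > 1" "y \<le> x" "g * x < d" "d\<^sup>2 = x\<^sup>2 + y\<^sup>2 - 2 * p"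
  shows "2 * (x * y - p) > g\<^sup>2 * x * y"
proof -
  have gx: "0 < g * x" using assms by simp
  have d2: "d\<^sup>2 > (g * x)\<^sup>2" using gx assms(5) by (simp add: power_strict_mono)
  have "(g*x)\<^sup>2 > x\<^sup>2" using assms by (simp add: power_strict_mono)
  then have yp: "y\<^sup>2 - 2 * p > 0" using d2 assms(6) by linarith
  have A: "y * d\<^sup>2 \<le> 2 * x * (x * y - p)"
  proof -
    have "2 * x * (x * y - p) - y * d\<^sup>2 = (x - y) * (x * y + (y\<^sup>2 - 2 * p))"
      unfolding assms(6) by (simp add: algebra_simps power2_eq_square)
    also have "\<dots> \<ge> 0" using assms yp by (intro mult_nonneg_nonneg) auto
    finally show ?thesis by simp
  qed
  have B: "y * d\<^sup>2 > y * (g * x)\<^sup>2" using d2 assms(2) by simp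
  have "y * (g * x)\<^sup>2 = x * (g\<^sup>2 * x * y)" by (simp add: power2_eq_square)
  then have "2 * x * (x * y - p) > x * (g\<^sup>2 * x * y)" using A B by linarith
  then show ?thesis using assms(1) by (simp add: mult.assoc)
qed

theorem mainTheorem10:
  fixes V T :: "'a::euclidean_space set" and \<gamma> :: real
    and OPT :: "'a set \<times> 'a set set" and a1 a2 b :: 'a
  assumes "\<gamma> > 1"
    and "finite V" and "T \<subseteq> V"
    and "stable_opt \<gamma> V T OPT"
    and "a1 \<in> T" and "a2 \<in> T" and "a1 \<noteq> a2"
    and "b \<in> V - T"
    and "{a1, b} \<in> snd OPT" and "{a2, b} \<in> snd OPT"
  shows "angle_at a1 b a2 > 2 * arcsin (\<gamma> / 2)"
proof -
  define u where "u = a1 - b"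
  define v where "v = a2 - b"
  define x where "x = norm u"
  define y where "y = norm v"
  define d where "d = norm (a1 - a2)"
  define p where "p = u \<bullet> v"
  have uv: "a1 - a2 = u - v" unfolding u_def v_def by simp
  have xp: "x > 0" "y > 0" using assms(5,6,8) unfolding x_def y_def u_def v_def by auto
  have h1: "\<gamma> * x < d" using side_ineq[OF assms] unfolding x_def d_def u_def .
  have h2: "\<gamma> * y < d"
    using side_ineq[OF assms(1-4) assms(6,5) assms(7)[symmetric] assms(8,10,9)]
    unfolding y_def d_def v_def by (simp add: norm_minus_commute)
  have dsq: "d\<^sup>2 = x\<^sup>2 + y\<^sup>2 - 2 * p"
    unfolding d_def uv x_def y_def p_def
    by (simp add: power2_norm_eq_inner inner_diff_left inner_diff_right inner_commute)
  have dle: "d \<le> x + y" unfolding d_def uv x_def y_def by (rule norm_triangle_ineq4)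
  have key: "2 * (x * y - p) > \<gamma>\<^sup>2 * x * y"
  proof (cases "y \<le> x")
    case True
    show ?thesis using core1[OF xp assms(1) True h1 dsq] .
  next
    case False
    have "d\<^sup>2 = y\<^sup>2 + x\<^sup>2 - 2 * p" using dsq by simp
    from core1[OF xp(2,1) assms(1) _ h2 this] False
    have "\<gamma>\<^sup>2 * y * x < 2 * (y * x - p)" by simp
    moreover have "\<gamma>\<^sup>2 * y * x = \<gamma>\<^sup>2 * x * y" "y * x = x * y" by (simp_all add: algebra_simps)
    ultimately show ?thesis by simp
  qed
  have g2: "\<gamma> < 2"
  proof (cases "y \<le> x")
    case True
    then have "\<gamma> * x < 2 * x" using h1 dle by linarith
    then show ?thesis using xp by simp
  next
    case False
    then have "\<gamma> * y < 2 * y" using h2 dle by linarith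
    then show ?thesis using xp by simp
  qed
  have xy: "x * y > 0" using xp by simp
  define c where "c = p / (x * y)"
  have ang: "angle_at a1 b a2 = arccos c"
    unfolding angle_at_def c_def p_def x_def y_def u_def v_def ..
  have c_lt: "c < 1 - \<gamma>\<^sup>2 / 2"
  proof -
    have "p < (1 - \<gamma>\<^sup>2 / 2) * (x * y)" using key by (simp add: algebra_simps)
    then show ?thesis unfolding c_def using xy by (simp add: pos_divide_less_eq)
  qed
  have c_ge: "-1 \<le> c"
  proof -
    have "\<bar>p\<bar> \<le> x * y" unfolding p_def x_def y_def by (rule Cauchy_Schwarz_ineq2)
    then have "- (x * y) \<le> p" by linarith
    then show ?thesis unfolding c_def using xy by (simp add: pos_le_divide_eq)
  qed
  define s where "s = \<gamma> / 2"
  have s: "0 < s" "s < 1" using assms(1) g2 unfolding s_def by auto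
  have as: "0 \<le> arcsin s" "arcsin s < pi / 2"
    using arcsin_nonneg[of s] arcsin_lt_bounded[of s] s by auto
  define t where "t = 2 * arcsin s"
  have t: "0 \<le> t" "t \<le> pi" using as unfolding t_def by auto
  have ct: "cos t = 1 - \<gamma>\<^sup>2 / 2"
    unfolding t_def cos_double_sin using s by (simp add: s_def power_divide)
  have "arccos (cos t) < arccos c"
    by (rule arccos_less_arccos) (use c_ge c_lt ct in auto)
  then show ?thesis using arccos_cos[OF t] ang unfolding t_def s_def by simp
qed

end
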